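(* Let $F\in\mathcal{Q}$ and define $\lambda=(\lambda_i)_{i\in\mathbb{Z}_{\ge0}}$ by $\lambda_i=2^{-F(i)}$. Let $k\in\mathbb{Z}_{\ge0}$, let $P_0,\dots,P_k$ be subsets of $\mathbb{Q}_{\ge0}$, and let $S\subseteq\mathbb{Q}_{\ge0}$. Assume there exist $a,b_0,\dots,b_k\in[0,\infty)$ such that (I) $a<b_i$ for all $i\in\{0,\dots,k\}$; (II) $b_i\neq b_j$ for $i\neq j$; (III) $S\cap P_i=[a,b_i)\cap\mathbb{Q}_{\ge0}$ for all $i\in\{0,\dots,k\}$. Then the $k+2$ real numbers $\langle\lambda,P_0\rangle,\dots,\langle\lambda,P_k\rangle,1$ are linearly independent over $\mathbb{Q}$.
   Context: Fix a bijection $Q\colon\mathbb{Z}_{\ge0}\to\mathbb{Q}_{\ge0}$. For a summable sequence $\alpha=(a_i)_{i\in\mathbb{Z}_{\ge0}}$ of positive reals and $B\subseteq\mathbb{Q}_{\ge0}$, put $\langle\alpha,B\rangle=\sum_{i:\,Q(i)\in B}a_i$, with $\langle\alpha,\emptyset\rangle=0$. $\mathcal{Q}$ denotes the set of all strictly increasing maps $F\colon\mathbb{Z}_{\ge0}\to\mathbb{Z}_{\ge0}$ such that $\lim_{n\to\infty}(F(n+1)-F(n))=\infty$ and $\lim_{n\to\infty}\sum_{m=n+1}^{\infty}2^{F(n)-F(m)}=0$. *)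

theory Defs
  imports "HOL-Analysis.Analysis"
begin

text \<open>The pairing of a summable sequence alpha with a set B of nonnegative rationals,
  relative to the fixed bijection Q from nat onto the nonnegative rationals.\<close>
definition pairing :: "(nat \<Rightarrow> rat) \<Rightarrow> (nat \<Rightarrow> real) \<Rightarrow> rat set \<Rightarrow> real" where
  "pairing Q \<alpha> B = (\<Sum>i. if Q i \<in> B then \<alpha> i else 0)"

definition classQ :: "(nat \<Rightarrow> nat) set" where
  "classQ = {F. strict_mono F
      \<and> filterlim (\<lambda>n. F (Suc n) - F n) at_top sequentially
      \<and> ((\<lambda>n. \<Sum>j. (2::real) powi (int (F n) - int (F (n + 1 + j)))) \<longlonglongrightarrow> 0)}"

definition rat_lin_indep :: "nat \<Rightarrow> (nat \<Rightarrow> real) \<Rightarrow> bool" where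
  "rat_lin_indep n x \<longleftrightarrow>
     (\<forall>c :: nat \<Rightarrow> rat. (\<Sum>i<n. of_rat (c i) * x i) = 0 \<longrightarrow> (\<forall>i<n. c i = 0))"

end

theory Submission imports Defs begin


lemma commden:
  fixes c :: "nat \<Rightarrow> rat"
  shows "\<exists>D::int. D > 0 \<and> (\<forall>i<n. of_int D * c i \<in> \<int>)"
proof (induction n)
  case 0 then show ?case by (intro exI[of _ 1]) auto
next
  case (Suc n)
  then obtain D where D: "D > 0" "\<forall>i<n. of_int D * c i \<in> \<int>" by blast
  obtain p q where pq: "quotient_of (c n) = (p, q)" by (cases "quotient_of (c n)")
  have q: "q > 0" using quotient_of_denom_pos[OF pq] .
  have cn: "c n = of_int p / of_int q" using quotient_of_div[OF pq] .
  show ?case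
  proof (intro exI[of _ "D*q"] conjI allI impI)
    show "D * q > 0" using D q by simp
    fix i assume "i < Suc n"
    then consider "i < n" | "i = n" by linarith
    then show "of_int (D*q) * c i \<in> \<int>"
    proof cases
      case 1
      then have "of_int D * c i \<in> \<int>" using D by blast
      then have "of_int q * (of_int D * c i) \<in> \<int>" by (rule Ints_mult[OF Ints_of_int])
      then show ?thesis by (simp add: algebra_simps)
    next
      case 2
      have "of_int (D*q) * c n = of_int (D * p)" using q by (simp add: cn field_simps)
      then show ?thesis using 2 by (metis Ints_of_int)
    qed
  qed
qed

lemma rats_infinite:
  fixes lo hi :: real assumes "lo < hi"
  shows "infinite {q::rat. lo < of_rat q \<and> of_rat q < hi}"
proof
  let ?E = "{q::rat. lo < of_rat q \<and> of_rat q < hi}"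
  assume fin: "finite ?E"
  obtain r where r: "r \<in> \<rat>" "lo < r" "r < hi" using Rats_dense_in_real[OF assms] by blast
  then obtain q0 where "r = of_rat q0" by (auto elim: Rats_cases)
  then have ne: "q0 \<in> ?E" using r by auto
  let ?m = "Max ?E"
  have mE: "?m \<in> ?E" using Max_in[OF fin] ne by blast
  obtain s where s: "s \<in> \<rat>" "of_rat ?m < s" "s < hi" using Rats_dense_in_real mE by blast
  then obtain q1 where q1: "s = of_rat q1" by (auto elim: Rats_cases)
  have "q1 \<in> ?E" using s mE q1 by auto
  then have "q1 \<le> ?m" using Max_ge[OF fin] by blast
  then have "of_rat q1 \<le> (of_rat ?m :: real)" by (simp add: of_rat_less_eq)
  then show False using s q1 by simp
qed



lemma eventually_zero:
  fixes w :: "nat \<Rightarrow> int" and W :: int and M :: int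
  assumes F: "F \<in> classQ"
    and Wb: "\<And>j. \<bar>w j\<bar> \<le> W"
    and y: "(\<Sum>j. of_int (w j) / 2^(F j)) = (of_int M :: real)"
  shows "\<exists>N. \<forall>j\<ge>N. w j = 0"
proof -
  have sm: "strict_mono F" and tl: "(\<lambda>n. \<Sum>j. (2::real) powi (int (F n) - int (F (n + 1 + j)))) \<longlonglongrightarrow> 0"
    using F by (auto simp: classQ_def)
  have Fge: "\<And>j. j \<le> F j" using seq_suble[OF sm] .
  have W0: "0 \<le> W" using Wb[of 0] by linarith
  define g where "g n m = (2::real)^F n / 2^F(n+1+m)" for n m
  have geq: "(2::real) powi (int (F n) - int (F (n + 1 + m))) = g n m" for n m
    by (simp add: g_def power_int_diff)
  have gpos: "0 \<le> g n m" for n m by (simp add: g_def)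
  have gsum: "summable (g n)" for n
  proof (rule summable_comparison_test)
    show "\<exists>N. \<forall>m\<ge>N. norm (g n m) \<le> 2^F n * (1/2)^m"
    proof (intro exI[of _ 0] allI impI)
      fix m
      have "(2::real)^m \<le> 2^F(n+1+m)" using Fge[of "n+1+m"] by (intro power_increasing) auto
      then have "g n m \<le> 2^F n / 2^m" unfolding g_def by (intro divide_left_mono) auto
      then show "norm (g n m) \<le> 2^F n * (1/2)^m" using gpos[of n m]
        by (simp add: power_one_over field_simps)
    qed
    show "summable (\<lambda>m. (2::real)^F n * (1/2)^m)" by (intro summable_mult summable_geometric) auto
  qed
  define f where "f j = (of_int (w j) / 2^(F j) :: real)" for j
  have fsum: "summable f"
  proof (rule summable_comparison_test)
    show "\<exists>N. \<forall>m\<ge>N. norm (f m) \<le> of_int W * (1/2)^m"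
    proof (intro exI[of _ 0] allI impI)
      fix m
      have "(2::real)^m \<le> 2^F m" using Fge[of m] by (intro power_increasing) auto
      moreover have "\<bar>of_int (w m)\<bar> \<le> (of_int W :: real)" using Wb[of m] by linarith
      ultimately have "\<bar>of_int (w m)\<bar> / 2^F m \<le> (of_int W :: real) / 2^m"
        using W0 by (intro frac_le) auto
      then show "norm (f m) \<le> of_int W * (1/2)^m"
        by (simp add: f_def power_one_over field_simps abs_divide)
    qed
    show "summable (\<lambda>m. (of_int W::real) * (1/2)^m)" by (intro summable_mult summable_geometric) auto
  qed
  define T where "T n = (\<Sum>m. of_int (w (n+1+m)) * g n m)" for n
  define A where "A n = (\<Sum>j<n+1. of_int (w j) * (2::real)^(F n - F j))" for n
  have ident: "2^F n * of_int M = A n + T n" for n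
  proof -
    have yf: "suminf f = of_int M" using y unfolding f_def[abs_def] .
    have "2^F n * (of_int M::real) = (\<Sum>j. 2^F n * f j)"
      unfolding yf[symmetric] by (rule suminf_mult[OF fsum, symmetric])
    also have "\<dots> = (\<Sum>m. 2^F n * f (m + (n+1))) + (\<Sum>j<n+1. 2^F n * f j)"
      by (rule suminf_split_initial_segment) (intro summable_mult fsum)
    also have "(\<lambda>m. 2^F n * f (m + (n+1))) = (\<lambda>m. of_int (w (n+1+m)) * g n m)"
      by (auto simp: f_def g_def add_ac)
    also have "(\<Sum>j<n+1. 2^F n * f j) = A n"
      unfolding A_def
    proof (rule sum.cong)
      fix j assume "j \<in> {..<n+1}"
      then have "F j \<le> F n" using sm by (simp add: strict_mono_less_eq)
      then show "2^F n * f j = of_int (w j) * (2::real)^(F n - F j)"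
        by (simp add: f_def power_diff)
    qed simp
    finally show ?thesis by (simp add: T_def)
  qed
  have Aint: "A n \<in> \<int>" for n unfolding A_def
    by (intro Ints_sum Ints_mult Ints_power) auto
  have Tint: "T n \<in> \<int>" for n
  proof -
    have "T n = 2^F n * of_int M - A n" using ident[of n] by simp
    also have "\<dots> \<in> \<int>" using Aint by (intro Ints_diff Ints_mult Ints_power) auto
    finally show ?thesis .
  qed
  have Tb: "\<bar>T n\<bar> \<le> of_int W * (\<Sum>m. g n m)" for n
  proof -
    have s1: "summable (\<lambda>m. of_int W * g n m)" by (intro summable_mult gsum)
    have s2: "summable (\<lambda>m. - (of_int W * g n m))" by (intro summable_minus s1)
    have bd: "\<bar>of_int (w (n+1+m)) * g n m\<bar> \<le> of_int W * g n m" for m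
    proof -
      have "\<bar>of_int (w (n+1+m))\<bar> \<le> (of_int W :: real)" using Wb[of "n+1+m"] by linarith
      then show ?thesis using gpos[of n m] by (simp add: abs_mult mult_right_mono)
    qed
    have s3: "summable (\<lambda>m. of_int (w (n+1+m)) * g n m)"
      by (rule summable_comparison_test[OF _ s1]) (use bd in auto)
    have "T n \<le> (\<Sum>m. of_int W * g n m)" unfolding T_def
      by (rule suminf_le[OF _ s3 s1]) (use bd in \<open>auto simp: abs_le_iff\<close>)
    moreover have "(\<Sum>m. - (of_int W * g n m)) \<le> T n" unfolding T_def
      by (rule suminf_le[OF _ s2 s3]) (metis bd abs_le_iff minus_le_iff)
    ultimately show ?thesis using suminf_mult[OF gsum, of "of_int W" n] suminf_minus[OF s1]
      by auto
  qed
  have "(\<lambda>n. of_int W * (\<Sum>m. g n m)) \<longlonglongrightarrow> of_int W * 0"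
    using tl unfolding geq by (intro tendsto_mult tendsto_const)
  then have "eventually (\<lambda>n. of_int W * (\<Sum>m. g n m) < (1::real)) sequentially"
    by (intro order_tendstoD) auto
  then obtain N0 where N0: "\<And>n. n \<ge> N0 \<Longrightarrow> of_int W * (\<Sum>m. g n m) < (1::real)"
    by (auto simp: eventually_sequentially)
  have T0: "T n = 0" if "n \<ge> N0" for n
    using Ints_nonzero_abs_less1[OF Tint[of n]] Tb[of n] N0[OF that] by linarith
  have "w (Suc n) = 0" if "n \<ge> N0" for n
  proof -
    have e1: "A n = 2^F n * of_int M" using ident[of n] T0[OF that] by simp
    have e2: "A (Suc n) = 2^F (Suc n) * of_int M" using ident[of "Suc n"] T0[of "Suc n"] that by simp
    have le: "F n \<le> F (Suc n)" using sm by (simp add: strict_mono_less_eq)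
    have "A (Suc n) = (\<Sum>j<n+1. of_int (w j) * (2::real)^(F (Suc n) - F j)) + of_int (w (Suc n))"
      by (simp add: A_def)
    also have "(\<Sum>j<n+1. of_int (w j) * (2::real)^(F (Suc n) - F j)) = 2^(F (Suc n) - F n) * A n"
      unfolding A_def sum_distrib_left
    proof (rule sum.cong)
      fix j assume "j \<in> {..<n+1}"
      then have "F j \<le> F n" using sm by (simp add: strict_mono_less_eq)
      then have "F (Suc n) - F j = (F (Suc n) - F n) + (F n - F j)" using le by simp
      then show "of_int (w j) * (2::real)^(F (Suc n) - F j) = 2^(F (Suc n) - F n) * (of_int (w j) * 2^(F n - F j))"
        by (simp add: power_add)
    qed simp
    finally have "of_int (w (Suc n)) = A (Suc n) - 2^(F (Suc n) - F n) * A n" by simp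
    also have "\<dots> = 0" using e1 e2 le by (simp add: power_diff)
    finally show ?thesis by simp
  qed
  then show ?thesis
    by (intro exI[of _ "Suc N0"]) (metis Suc_le_D Suc_le_mono)
qed



theorem proposition3p3:
  fixes Q :: "nat \<Rightarrow> rat" and F :: "nat \<Rightarrow> nat" and k :: nat
    and P :: "nat \<Rightarrow> rat set" and S :: "rat set"
    and a :: real and b :: "nat \<Rightarrow> real"
  assumes Q: "bij_betw Q UNIV {q. q \<ge> 0}"
    and F: "F \<in> classQ"
    and P: "\<And>i. i \<le> k \<Longrightarrow> P i \<subseteq> {q. q \<ge> 0}"
    and S: "S \<subseteq> {q. q \<ge> 0}"
    and a: "a \<ge> 0" and b: "\<And>i. i \<le> k \<Longrightarrow> b i \<ge> 0"
    and I: "\<And>i. i \<le> k \<Longrightarrow> a < b i"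
    and II: "\<And>i j. i \<le> k \<Longrightarrow> j \<le> k \<Longrightarrow> i \<noteq> j \<Longrightarrow> b i \<noteq> b j"
    and III: "\<And>i. i \<le> k \<Longrightarrow>
              S \<inter> P i = {q. q \<ge> 0 \<and> a \<le> of_rat q \<and> of_rat q < b i}"
  shows "rat_lin_indep (k + 2)
           (\<lambda>i. if i \<le> k then pairing Q (\<lambda>j. 2 powi (- int (F j))) (P i) else 1)"
  unfolding rat_lin_indep_def
proof (intro allI impI)
  fix c :: "nat \<Rightarrow> rat"
  let ?X = "\<lambda>i. if i \<le> k then pairing Q (\<lambda>j. 2 powi (- int (F j))) (P i) else (1::real)"
  assume eq: "(\<Sum>i<k + 2. of_rat (c i) * ?X i) = 0"
  obtain D :: int where D: "D > 0" "\<forall>i<k+2. of_int D * c i \<in> \<int>" using commden by blast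
  have "\<forall>i. \<exists>m. i < k+2 \<longrightarrow> of_int D * c i = of_int m"
    using D(2) by (metis Ints_cases)
  then obtain e where e: "\<And>i. i < k+2 \<Longrightarrow> of_int D * c i = of_int (e i)" by metis
  have er: "(of_int (e i)::real) = of_int D * of_rat (c i)" if "i < k+2" for i
  proof -
    have "(of_rat (of_int D * c i)::real) = of_rat (of_int (e i))" using e[OF that] by simp
    then show ?thesis by (simp add: of_rat_mult)
  qed
  have sm: "strict_mono F" using F by (simp add: classQ_def)
  have Fge: "\<And>j. j \<le> F j" using seq_suble[OF sm] .
  define x where "x i = (\<Sum>j. if Q j \<in> P i then 1 / (2::real)^F j else 0)" for i
  have Xx': "pairing Q (\<lambda>j. 2 powi (- int (F j))) (P i) = x i" for i
    by (simp add: x_def pairing_def power_int_minus_divide)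
  have xsum: "summable (\<lambda>j. if Q j \<in> P i then 1 / (2::real)^F j else 0)" for i
  proof (rule summable_comparison_test)
    show "\<exists>N. \<forall>m\<ge>N. norm (if Q m \<in> P i then 1 / (2::real)^F m else 0) \<le> (1/2)^m"
    proof (intro exI[of _ 0] allI impI)
      fix m
      have "(2::real)^m \<le> 2^F m" using Fge[of m] by (intro power_increasing) auto
      then show "norm (if Q m \<in> P i then 1 / (2::real)^F m else 0) \<le> (1/2)^m"
        by (simp add: power_one_over divide_simps)
    qed
    show "summable (\<lambda>m. (1/2::real)^m)" by (intro summable_geometric) auto
  qed
  have eq2: "(\<Sum>i\<le>k. of_int (e i) * x i) + of_int (e (k+1)) = (0::real)"
  proof -
    have "(\<Sum>i<k + 2. of_int (e i) * ?X i) = (\<Sum>i<k + 2. of_int D * (of_rat (c i) * ?X i))"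
      by (rule sum.cong) (auto simp: er)
    also have "\<dots> = 0" using eq by (simp add: sum_distrib_left[symmetric])
    finally have "(\<Sum>i<Suc (Suc k). of_int (e i) * ?X i) = 0" by simp
    then have "(\<Sum>i<Suc k. of_int (e i) * ?X i) + of_int (e (k+1)) = 0" by simp
    moreover have "(\<Sum>i<Suc k. of_int (e i) * ?X i) = (\<Sum>i\<le>k. of_int (e i) * x i)"
      by (rule sum.cong) (auto simp: Xx' lessThan_Suc_atMost)
    ultimately show ?thesis by simp
  qed
  define w where "w j = (\<Sum>i\<le>k. if Q j \<in> P i then e i else 0)" for j
  define W where "W = (\<Sum>i\<le>k. \<bar>e i\<bar>)"
  have Wb: "\<bar>w j\<bar> \<le> W" for j
    unfolding w_def W_def by (rule order_trans[OF sum_abs]) (intro sum_mono, auto)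
  have ysum: "(\<Sum>j. of_int (w j) / 2^(F j)) = (of_int (- e (k+1)) :: real)"
  proof -
    have "(\<Sum>j. of_int (w j) / 2^(F j)) = (\<Sum>j. \<Sum>i\<le>k. of_int (e i) * (if Q j \<in> P i then 1 / (2::real)^F j else 0))"
      by (rule suminf_cong) (simp add: w_def sum_divide_distrib of_int_sum, rule sum.cong, auto)
    also have "\<dots> = (\<Sum>i\<le>k. \<Sum>j. of_int (e i) * (if Q j \<in> P i then 1 / (2::real)^F j else 0))"
      by (rule suminf_sum) (intro summable_mult xsum)
    also have "\<dots> = (\<Sum>i\<le>k. of_int (e i) * x i)"
      by (rule sum.cong) (auto simp: x_def suminf_mult[OF xsum])
    finally show ?thesis using eq2 by simp
  qed
  obtain N where N: "\<And>j. j \<ge> N \<Longrightarrow> w j = 0" using eventually_zero[OF F Wb ysum] by blast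
  have Qsurj: "\<And>q. q \<ge> 0 \<Longrightarrow> \<exists>j. Q j = q" using Q unfolding bij_betw_def by (metis (mono_tags) mem_Collect_eq rangeE)
  have sumzero: "(\<Sum>j\<in>{j. j \<le> k \<and> b i \<le> b j}. e j) = 0" if i: "i \<le> k" for i
  proof -
    define lo where "lo = Max ({a} \<union> b ` {j. j \<le> k \<and> b j < b i})"
    have fin: "finite ({a} \<union> b ` {j. j \<le> k \<and> b j < b i})" by auto
    have lo_lt: "lo < b i" unfolding lo_def using fin I[OF i] by (subst Max_less_iff) auto
    have alo: "a \<le> lo" unfolding lo_def using fin by (intro Max_ge) auto
    have blo: "b j \<le> lo" if "j \<le> k" "b j < b i" for j
      unfolding lo_def using fin that by (intro Max_ge) auto
    have "infinite {q::rat. lo < of_rat q \<and> of_rat q < b i}" using rats_infinite[OF lo_lt] .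
    then have "infinite ({q::rat. lo < of_rat q \<and> of_rat q < b i} - Q ` {..<N})"
      by (intro Diff_infinite_finite) auto
    then obtain q where q: "q \<in> {q::rat. lo < of_rat q \<and> of_rat q < b i} - Q ` {..<N}"
      using infinite_imp_nonempty by blast
    have qlo: "lo < of_rat q" using q by auto
    have qpos: "(0::real) < of_rat q" using qlo alo a by linarith
    then have q0: "q \<ge> 0" by (simp add: zero_less_of_rat_iff less_imp_le)
    obtain j where j: "Q j = q" using Qsurj[OF q0] by blast
    have "j \<ge> N"
    proof (rule ccontr)
      assume "\<not> j \<ge> N"
      then have "q \<in> Q ` {..<N}" using j by auto
      then show False using q by blast
    qed
    then have wj: "w j = 0" using N by blast
    have qlt: "of_rat q < b i" using q by blast
    have aq: "a \<le> of_rat q" using qlo alo by linarith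
    have "q \<in> {q. q \<ge> 0 \<and> a \<le> of_rat q \<and> of_rat q < b i}" using q0 aq qlt by blast
    then have qS: "q \<in> S" using III[OF i] by blast
    have mem: "q \<in> P j' \<longleftrightarrow> b i \<le> b j'" if "j' \<le> k" for j'
    proof -
      have "q \<in> P j' \<longleftrightarrow> q \<in> S \<inter> P j'" using qS by auto
      also have "\<dots> \<longleftrightarrow> q \<in> {q. q \<ge> 0 \<and> a \<le> of_rat q \<and> of_rat q < b j'}"
        using III[OF that] by simp
      also have "\<dots> \<longleftrightarrow> of_rat q < b j'" using q0 aq by simp
      also have "\<dots> \<longleftrightarrow> b i \<le> b j'"
        using qlt qlo blo[OF that] by (cases "b j' < b i") auto
      finally show ?thesis .
    qed
    have seq: "{j. j \<le> k \<and> b i \<le> b j} = {j' \<in> {..k}. b i \<le> b j'}" by auto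
    have "(\<Sum>j\<in>{j. j \<le> k \<and> b i \<le> b j}. e j) = (\<Sum>j'\<le>k. if b i \<le> b j' then e j' else 0)"
      unfolding seq by (rule sum.inter_filter) simp
    also have "\<dots> = w j" unfolding w_def j by (rule sum.cong) (auto simp: mem)
    finally show ?thesis using wj by simp
  qed
  have ezero: "\<And>i. i \<le> k \<Longrightarrow> card {j. j \<le> k \<and> b i < b j} = m \<Longrightarrow> e i = 0" for m
  proof (induction m rule: less_induct)
    case (less m)
    fix i assume i: "i \<le> k" and cm: "card {j. j \<le> k \<and> b i < b j} = m"
    have ej: "e j = 0" if "j \<le> k" "b i < b j" for j
    proof -
      have s1: "{j'. j' \<le> k \<and> b j < b j'} \<subseteq> {j. j \<le> k \<and> b i < b j}"
        using that by (auto intro: less_trans)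
      have s2: "j \<in> {j. j \<le> k \<and> b i < b j}" "j \<notin> {j'. j' \<le> k \<and> b j < b j'}"
        using that by auto
      have "{j'. j' \<le> k \<and> b j < b j'} \<subset> {j. j \<le> k \<and> b i < b j}"
        using s1 s2 by blast
      then have "card {j'. j' \<le> k \<and> b j < b j'} < m" using cm psubset_card_mono[of "{j. j \<le> k \<and> b i < b j}"] by simp
      then show ?thesis using less.IH that(1) by blast
    qed
    have "{j. j \<le> k \<and> b i \<le> b j} = insert i {j. j \<le> k \<and> b i < b j}"
    proof (intro set_eqI iffI)
      fix j assume "j \<in> {j. j \<le> k \<and> b i \<le> b j}"
      then have "j \<le> k" "b i \<le> b j" by auto
      then show "j \<in> insert i {j. j \<le> k \<and> b i < b j}"
        using II[OF i, of j] by (cases "j = i") auto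
    qed (use i in auto)
    then have "(\<Sum>j\<in>{j. j \<le> k \<and> b i \<le> b j}. e j) = e i + (\<Sum>j\<in>{j. j \<le> k \<and> b i < b j}. e j)"
      by simp
    also have "(\<Sum>j\<in>{j. j \<le> k \<and> b i < b j}. e j) = 0" using ej by (intro sum.neutral) auto
    finally show "e i = 0" using sumzero[OF i] by simp
  qed
  have eall: "e i = 0" if "i \<le> k" for i using ezero[OF that refl] .
  have ek: "e (k+1) = 0" using eq2 eall by simp
  fix i assume "i < k + 2"
  then have "e i = 0" proof (cases "i \<le> k")
    case False
    then have "i = Suc k" using \<open>i < k+2\<close> by linarith
    then show ?thesis using ek by simp
  qed (use eall in auto)
  then have "of_int D * c i = 0" using e[OF \<open>i < k+2\<close>] by simp
  then show "c i = 0" using D(1) by simp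
qed


end
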